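(* There exist absolute constants $c\in(0,1)$, $C>0$, $c'>0$ and $m_0$ such that for every integer $m\ge m_0$, with $X=[m]=\{1,\dots,m\}$ and considering distributions $\mathrm{Unif}(X')$ for nonempty $X'\subseteq X$: (1) Let $n_{\mathrm{small}}=\lceil C\sqrt m\rceil$. For every integer $1\le k\le m$ there is $f:X^{n_{\mathrm{small}}}\to\{0,1\}$ such that: if $|X'|\ge k$, then for every $\mathcal D'\in\mathrm{sub}(\mathrm{Unif}(X'))$, $\Pr_{S\sim(\mathcal D')^{n_{\mathrm{small}}}}[f(S)=1]\ge0.99$; and if $|X'|\le ck$, then for every $\mathcal D'\in\mathrm{sub}(\mathrm{Unif}(X'))$, $\Pr_{S\sim(\mathcal D')^{n_{\mathrm{small}}}}[f(S)=1]\le0.01$. (2) Let $N=\lfloor c'm\rfloor$ and $k=m$. For every $f:X^N\to\{0,1\}$, either there is $X'$ with $|X'|=m$ such that $\mathbb E_{S\sim\mathrm{Unif}(X')^{2N}}\big[\min_{S'\in\mathrm{sub}(S)}f(S')\big]\le0.51$, or there is $X'$ with $|X'|\le cm$ such that $\mathbb E_{S\sim\mathrm{Unif}(X')^{2N}}\big[\max_{S'\in\mathrm{sub}(S)}f(S')\big]\ge0.49$. (Thus no $f$ using $N=\Theta(m)$ samples achieves under adaptive subtractive contamination the distinguishing guarantee that $O(\sqrt m)$ samples achieve under oblivious subtractive contamination.)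
   Context: For a distribution $\mathcal D$, $\mathrm{sub}(\mathcal D)$ is the set of distributions obtained as the law of $x\sim\mathcal D$ conditioned on some event of probability (at least) $1/2$ (oblivious $1/2$-subtractive contamination). For a sample $S\in X^{2N}$, $\mathrm{sub}(S)$ is the set of samples $S'\in X^N$ with $S'_j=S_{i_j}$ for some $N$ distinct indices $i_1,\dots,i_N\in[2N]$ (adaptive $1/2$-subtractive contamination: the adversary sees $S$ and removes half of it). *)

theory Defs
  imports "HOL-Probability.Probability"
begin

fun iid_pmf :: "nat \<Rightarrow> 'a pmf \<Rightarrow> 'a list pmf" where
  "iid_pmf 0 p = return_pmf []"
| "iid_pmf (Suc n) p = bind_pmf p (\<lambda>x. map_pmf (\<lambda>xs. x # xs) (iid_pmf n p))"

text \<open>Oblivious 1/2-subtractive contamination: laws of x ~ D conditioned on an event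
  (possibly involving extra randomness) of probability at least 1/2, i.e. exactly the
  distributions D' with D' \<le> 2 D pointwise.\<close>
definition sub_dist :: "'a pmf \<Rightarrow> 'a pmf set" where
  "sub_dist D = {D'. \<forall>x. pmf D' x \<le> 2 * pmf D x}"

text \<open>Adaptive 1/2-subtractive contamination of a sample S of length 2N: subsamples
  of size N given by N distinct indices.\<close>
definition sub_sample :: "nat \<Rightarrow> 'a list \<Rightarrow> 'a list set" where
  "sub_sample N S = {map (\<lambda>i. S ! i) is | is. length is = N \<and> distinct is \<and> set is \<subseteq> {..<2*N}}"

end

theory Submission
  imports Defs "HOL-Combinatorics.Permutations"
begin


lemma set_pmf_iid: "set_pmf (iid_pmf n p) \<subseteq> {xs. set xs \<subseteq> set_pmf p \<and> length xs = n}"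
  by (induction n) fastforce+

lemma finite_set_iid: "finite (set_pmf p) \<Longrightarrow> finite (set_pmf (iid_pmf n p))"
  by (rule finite_subset[OF set_pmf_iid]) (simp add: finite_lists_length_eq)

lemma measure_bind_fin:
  assumes "finite A" "set_pmf p \<subseteq> A" "\<And>x. x \<in> A \<Longrightarrow> finite (set_pmf (f x))"
  shows "measure_pmf.prob (p \<bind> f) B = (\<Sum>a\<in>A. pmf p a * measure_pmf.prob (f a) B)"
proof -
  have "measure_pmf.prob (p \<bind> f) B = measure_pmf.expectation (p \<bind> f) (indicator B)"
    by simp
  also have "\<dots> = (\<Sum>a\<in>A. pmf p a *\<^sub>R measure_pmf.expectation (f a) (indicator B))"
    by (rule pmf_expectation_bind[OF assms(1) assms(3) assms(2)])
  also have "\<dots> = (\<Sum>a\<in>A. pmf p a * measure_pmf.prob (f a) B)" by simp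
  finally show ?thesis .
qed

lemma iid_map: "map_pmf (map g) (iid_pmf n p) = iid_pmf n (map_pmf g p)"
proof (induction n)
  case 0 thus ?case by simp
next
  case (Suc n)
  have "map_pmf (map g) (iid_pmf (Suc n) p) = bind_pmf p (\<lambda>x. map_pmf (\<lambda>xs. g x # xs) (map_pmf (map g) (iid_pmf n p)))"
    by (simp add: map_bind_pmf map_pmf_comp)
  also have "\<dots> = iid_pmf (Suc n) (map_pmf g p)"
    by (simp add: Suc bind_map_pmf)
  finally show ?case .
qed

lemma iid_take: "L \<le> n \<Longrightarrow> map_pmf (take L) (iid_pmf n p) = iid_pmf L p"
proof (induction L arbitrary: n)
  case 0 thus ?case by (simp add: map_pmf_const)
next
  case (Suc L)
  then obtain n' where n: "n = Suc n'" "L \<le> n'" by (cases n) auto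
  have "map_pmf (take (Suc L)) (iid_pmf n p) = bind_pmf p (\<lambda>x. map_pmf (\<lambda>xs. x # xs) (map_pmf (take L) (iid_pmf n' p)))"
    by (simp add: n map_bind_pmf map_pmf_comp)
  also have "\<dots> = iid_pmf (Suc L) p" by (simp add: Suc.IH[OF n(2)])
  finally show ?case .
qed

fun Rd :: "'a set \<Rightarrow> ('a \<Rightarrow> real) \<Rightarrow> 'a set \<Rightarrow> nat \<Rightarrow> real" where
  "Rd U p A 0 = 1"
| "Rd U p A (Suc n) = (\<Sum>y\<in>U-A. p y * Rd U p (insert y A) n)"

lemma Rd_conn:
  assumes "finite U" "set_pmf D \<subseteq> U"
  shows "measure_pmf.prob (iid_pmf n D) {xs. distinct xs \<and> set xs \<inter> A = {}} = Rd U (pmf D) A n"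
proof (induction n arbitrary: A)
  case 0 thus ?case by simp
next
  case (Suc n)
  have fin: "\<And>x. finite (set_pmf (map_pmf ((#) x) (iid_pmf n D)))"
    using finite_set_iid[OF finite_subset[OF assms(2) assms(1)]] by simp
  have "measure_pmf.prob (iid_pmf (Suc n) D) {xs. distinct xs \<and> set xs \<inter> A = {}}
     = (\<Sum>a\<in>U. pmf D a * measure_pmf.prob (map_pmf ((#) a) (iid_pmf n D)) {xs. distinct xs \<and> set xs \<inter> A = {}})"
    by (simp only: iid_pmf.simps) (rule measure_bind_fin[OF assms fin])
  also have "\<dots> = (\<Sum>a\<in>U. if a \<in> A then 0 else pmf D a * Rd U (pmf D) (insert a A) n)"
  proof (rule sum.cong[OF refl])
    fix a assume "a \<in> U"
    show "pmf D a * measure_pmf.prob (map_pmf ((#) a) (iid_pmf n D)) {xs. distinct xs \<and> set xs \<inter> A = {}}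
      = (if a \<in> A then 0 else pmf D a * Rd U (pmf D) (insert a A) n)"
    proof (cases "a \<in> A")
      case True
      hence "((#) a -` {xs. distinct xs \<and> set xs \<inter> A = {}}) = {}" by auto
      thus ?thesis using True by simp
    next
      case False
      hence "((#) a -` {xs. distinct xs \<and> set xs \<inter> A = {}}) = {xs. distinct xs \<and> set xs \<inter> insert a A = {}}" by auto
      thus ?thesis using False Suc[of "insert a A"] by simp
    qed
  qed
  also have "\<dots> = Rd U (pmf D) A (Suc n)"
    using assms(1) by (simp add: sum.If_cases Diff_eq)
  finally show ?case .
qed

context fixes U :: "'a set" and p :: "'a \<Rightarrow> real"
  assumes finU: "finite U" and pnn: "\<And>y. p y \<ge> 0"
begin

lemma Rd_nonneg: "0 \<le> Rd U p A n"
  by (induction n arbitrary: A) (auto intro!: sum_nonneg mult_nonneg_nonneg pnn)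

lemma Rd_antimono: "B \<subseteq> A \<Longrightarrow> Rd U p A n \<le> Rd U p B n"
proof (induction n arbitrary: A B)
  case 0 thus ?case by simp
next
  case (Suc n)
  have "Rd U p A (Suc n) \<le> (\<Sum>y\<in>U-A. p y * Rd U p (insert y B) n)"
    using Suc by (auto intro!: sum_mono mult_left_mono pnn Suc.IH insert_mono)
  also have "\<dots> \<le> (\<Sum>y\<in>U-B. p y * Rd U p (insert y B) n)"
    using Suc.prems finU by (intro sum_mono2) (auto intro!: mult_nonneg_nonneg pnn Rd_nonneg)
  finally show ?case by simp
qed

lemma Rd_le1: "sum p U \<le> 1 \<Longrightarrow> Rd U p A n \<le> 1"
proof (induction n arbitrary: A)
  case 0 thus ?case by simp
next
  case (Suc n)
  have "Rd U p A (Suc n) \<le> (\<Sum>y\<in>U-A. p y)"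
    using Suc by (auto intro!: sum_mono mult_left_le pnn)
  also have "\<dots> \<le> sum p U" using finU by (intro sum_mono2) (auto intro: pnn)
  finally show ?case using Suc.prems by simp
qed

lemma Rd_Suc_le: "sum p U \<le> 1 \<Longrightarrow> Rd U p A (Suc n) \<le> Rd U p A n"
proof (induction n arbitrary: A)
  case 0
  have "Rd U p A (Suc 0) = (\<Sum>y\<in>U-A. p y)" by simp
  also have "\<dots> \<le> sum p U" using finU by (intro sum_mono2) (auto intro: pnn)
  finally show ?case using 0 by simp
next
  case (Suc n)
  have "Rd U p A (Suc (Suc n)) = (\<Sum>y\<in>U-A. p y * Rd U p (insert y A) (Suc n))" by (rule Rd.simps(2))
  also have "\<dots> \<le> (\<Sum>y\<in>U-A. p y * Rd U p (insert y A) n)" by (intro sum_mono mult_left_mono pnn Suc.IH Suc.prems)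
  also have "\<dots> = Rd U p A (Suc n)" by (rule Rd.simps(2)[symmetric])
  finally show ?case .
qed

lemma Rd_split: "x \<in> U - A \<Longrightarrow> Rd U p A (Suc n) = Rd U p (insert x A) (Suc n) + real (Suc n) * p x * Rd U p (insert x A) n"
proof (induction n arbitrary: A)
  case 0
  have e: "U - A - {x} = U - insert x A" by auto
  have "(\<Sum>y\<in>U-A. p y) = p x + (\<Sum>y\<in>U-A-{x}. p y)" by (rule sum.remove) (use finU 0 in auto)
  hence "(\<Sum>y\<in>U-A. p y) = p x + (\<Sum>y\<in>U - insert x A. p y)" by (simp only: e)
  thus ?case by simp
next
  case (Suc n)
  have "Rd U p A (Suc (Suc n)) = p x * Rd U p (insert x A) (Suc n) + (\<Sum>y\<in>U - insert x A. p y * Rd U p (insert y A) (Suc n))"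
  proof -
    have e: "U - A - {x} = U - insert x A" by auto
    have "Rd U p A (Suc (Suc n)) = (\<Sum>y\<in>U-A. p y * Rd U p (insert y A) (Suc n))" by (rule Rd.simps(2))
    also have "\<dots> = p x * Rd U p (insert x A) (Suc n) + (\<Sum>y\<in>U-A-{x}. p y * Rd U p (insert y A) (Suc n))"
      by (rule sum.remove) (use finU Suc.prems in auto)
    finally show ?thesis by (simp only: e)
  qed
  also have "(\<Sum>y\<in>U - insert x A. p y * Rd U p (insert y A) (Suc n)) = (\<Sum>y\<in>U - insert x A. p y * Rd U p (insert y (insert x A)) (Suc n) + real (Suc n) * p x * (p y * Rd U p (insert y (insert x A)) n))"
  proof (rule sum.cong[OF refl])
    fix y assume y: "y \<in> U - insert x A"
    hence "x \<in> U - insert y A" using Suc.prems by auto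
    from Suc.IH[OF this] show "p y * Rd U p (insert y A) (Suc n) = p y * Rd U p (insert y (insert x A)) (Suc n) + real (Suc n) * p x * (p y * Rd U p (insert y (insert x A)) n)"
      by (simp add: insert_commute algebra_simps)
  qed
  also have "\<dots> = Rd U p (insert x A) (Suc (Suc n)) + real (Suc n) * p x * Rd U p (insert x A) (Suc n)"
    by (simp add: sum.distrib sum_distrib_left)
  finally show ?case by (simp add: algebra_simps)
qed

end


context fixes U :: "'a set" and p :: "'a \<Rightarrow> real"
  assumes finU: "finite U" and pnn: "\<And>y. p y \<ge> 0" and psum: "sum p U = 1"
begin

abbreviation "P n \<equiv> Rd U p {} n"

lemma P_Suc: "P (Suc n) = (\<Sum>x\<in>U. p x * Rd U p {x} n)" by simp

declare Rd.simps(2)[simp del]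

lemma P_mono: "P (Suc n) \<le> P n"
  using Rd_Suc_le[OF finU pnn, where A="{}" and n=n] psum by simp

lemma P_ge: assumes M: "\<And>x. x \<in> U \<Longrightarrow> p x \<le> M" shows "P (Suc n) \<ge> P n - real n * M"
proof (cases n)
  case 0 thus ?thesis using psum by (simp add: P_Suc)
next
  case (Suc n')
  have "P n - real n * M = (\<Sum>x\<in>U. p x * (P n - real n * M))" using psum by (simp add: sum_distrib_right[symmetric])
  also have "\<dots> \<le> (\<Sum>x\<in>U. p x * Rd U p {x} n)"
  proof (rule sum_mono)
    fix x assume x: "x \<in> U"
    have sp: "Rd U p {} n = Rd U p {x} n + real n * p x * Rd U p {x} n'"
      using Rd_split[OF finU pnn, where x=x and A="{}" and n=n'] x Suc by simp
    have "Rd U p {x} n' \<le> 1" using Rd_le1[OF finU pnn, where A="{x}" and n=n'] psum by simp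
    hence "p x * Rd U p {x} n' \<le> p x" by (rule mult_left_le[OF _ pnn])
    hence "p x * Rd U p {x} n' \<le> M" using M[OF x] by linarith
    hence "real n * (p x * Rd U p {x} n') \<le> real n * M" by (intro mult_left_mono) auto
    hence "P n - real n * M \<le> Rd U p {x} n" using sp by (simp add: algebra_simps)
    thus "p x * (P n - real n * M) \<le> p x * Rd U p {x} n" by (intro mult_left_mono pnn)
  qed
  finally show ?thesis by (simp add: P_Suc)
qed

lemma P_lower: assumes M: "\<And>x. x \<in> U \<Longrightarrow> p x \<le> M" "M \<ge> 0" shows "P n \<ge> 1 - M * real n ^ 2"
proof (induction n)
  case 0 thus ?case by simp
next
  case (Suc n)
  have "P (Suc n) \<ge> P n - real n * M" by (rule P_ge[OF M(1)])
  moreover have "1 - M * real (Suc n) ^ 2 \<le> 1 - M * real n ^ 2 - real n * M"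
    using M(2) by (simp add: power2_eq_square algebra_simps)
  ultimately show ?case using Suc by linarith
qed

lemma P_step: assumes d: "0 \<le> d" "d \<le> 1/2" "d * real (card U) \<le> real (Suc n)"
  shows "P (Suc (Suc n)) \<le> (1 - d) * P n"
proof -
  define R where "R x = Rd U p {x} n" for x
  define T where "T = (\<Sum>x\<in>U. (p x)^2 * R x)"
  have Rnn: "\<And>x. R x \<ge> 0" unfolding R_def by (rule Rd_nonneg[OF finU pnn])
  have P1: "P (Suc n) = (\<Sum>x\<in>U. p x * R x)" by (simp add: R_def P_Suc)
  have P2: "P (Suc (Suc n)) = P (Suc n) - real (Suc n) * T"
  proof -
    have "P (Suc (Suc n)) = (\<Sum>x\<in>U. p x * Rd U p {x} (Suc n))" by (rule P_Suc)
    also have "\<dots> = (\<Sum>x\<in>U. p x * P (Suc n) - real (Suc n) * ((p x)^2 * R x))"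
    proof (rule sum.cong[OF refl])
      fix x assume "x \<in> U"
      hence "P (Suc n) = Rd U p {x} (Suc n) + real (Suc n) * p x * R x"
        using Rd_split[OF finU pnn, where x=x and A="{}" and n=n] by (simp add: R_def)
      thus "p x * Rd U p {x} (Suc n) = p x * P (Suc n) - real (Suc n) * ((p x)^2 * R x)"
        by (simp add: power2_eq_square algebra_simps)
    qed
    also have "\<dots> = P (Suc n) - real (Suc n) * T"
      by (simp add: sum_subtractf sum_distrib_right[symmetric] sum_distrib_left[symmetric] psum T_def)
    finally show ?thesis .
  qed
  have SR: "(\<Sum>x\<in>U. R x) \<le> real (card U) * P n"
  proof -
    have "(\<Sum>x\<in>U. R x) \<le> (\<Sum>x\<in>U. P n)"
      unfolding R_def by (intro sum_mono Rd_antimono[OF finU pnn]) auto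
    thus ?thesis by simp
  qed
  have CS: "(P (Suc n))^2 \<le> T * (\<Sum>x\<in>U. R x)"
  proof -
    have "(\<Sum>x\<in>U. (p x * sqrt (R x)) * sqrt (R x))^2 \<le> (\<Sum>x\<in>U. (p x * sqrt (R x))^2) * (\<Sum>x\<in>U. (sqrt (R x))^2)"
      by (rule Cauchy_Schwarz_ineq_sum)
    hence "(\<Sum>x\<in>U. p x * R x)^2 \<le> T * (\<Sum>x\<in>U. R x)" using Rnn by (simp add: T_def power_mult_distrib mult.assoc)
    thus ?thesis by (simp only: P1)
  qed
  have Tnn: "T \<ge> 0" unfolding T_def using Rnn by (auto intro!: sum_nonneg)
  have P0nn: "P n \<ge> 0" by (rule Rd_nonneg[OF finU pnn])
  have P1nn: "P (Suc n) \<ge> 0" by (rule Rd_nonneg[OF finU pnn])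
  have P1le: "P (Suc n) \<le> P n" by (rule P_mono)
  have P2nn: "P (Suc (Suc n)) \<ge> 0" by (rule Rd_nonneg[OF finU pnn])
  have key: "d * (P (Suc n))^2 \<le> real (Suc n) * T * P n"
  proof -
    have "d * (P (Suc n))^2 \<le> d * (T * (real (card U) * P n))"
      using CS SR Tnn d(1) by (meson mult_left_mono order_trans)
    also have "\<dots> = (d * real (card U)) * (T * P n)" by simp
    also have "\<dots> \<le> real (Suc n) * (T * P n)" using d(3) Tnn P0nn by (intro mult_right_mono) auto
    finally show ?thesis by simp
  qed
  show ?thesis
  proof (cases "P n = 0")
    case True
    thus ?thesis using P_mono[of "Suc n"] P1le P2nn by simp
  next
    case False
    hence pos: "P n > 0" using P0nn by simp
    have "P n * P (Suc (Suc n)) \<le> P n * P (Suc n) - d * (P (Suc n))^2"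
    proof -
      have e: "P n * P (Suc (Suc n)) = P n * P (Suc n) - real (Suc n) * T * P n"
        by (subst P2) (simp add: algebra_simps)
      show ?thesis using e key by (simp add: algebra_simps)
    qed
    also have "\<dots> \<le> (1 - d) * (P n)^2"
    proof -
      have "0 \<le> (P n - P (Suc n)) * ((1 - d) * P n - d * P (Suc n))"
      proof (rule mult_nonneg_nonneg)
        show "0 \<le> P n - P (Suc n)" using P1le by simp
        have a: "d * P (Suc n) \<le> d * P n" by (rule mult_left_mono[OF P1le d(1)])
        have b: "d * P n \<le> (1-d) * P n" using d P0nn by (intro mult_right_mono) auto
        show "0 \<le> (1 - d) * P n - d * P (Suc n)" using a b by simp
      qed
      thus ?thesis by (simp add: power2_eq_square algebra_simps)
    qed
    finally have "P n * P (Suc (Suc n)) \<le> P n * ((1 - d) * P n)" by (simp add: power2_eq_square algebra_simps)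
    thus ?thesis using pos by simp
  qed
qed

lemma P_iter: assumes d: "0 \<le> d" "d \<le> 1/2" "d * real (card U) \<le> real (Suc a)"
  shows "P (a + 2 * j) \<le> (1 - d) ^ j"
proof (induction j)
  case 0 show ?case using Rd_le1[OF finU pnn, where A="{}" and n=a] psum by simp
next
  case (Suc j)
  have "P (a + 2 * Suc j) = P (Suc (Suc (a + 2 * j)))" by simp
  also have "\<dots> \<le> (1 - d) * P (a + 2 * j)" using d by (intro P_step) auto
  also have "\<dots> \<le> (1 - d) * (1 - d) ^ j" using Suc d by (intro mult_left_mono) auto
  finally show ?case by simp
qed

end




lemma sub_props:
  assumes "finite X'" "X' \<noteq> {}" "D' \<in> sub_dist (pmf_of_set X')"
  shows "set_pmf D' \<subseteq> X'" "\<And>x. pmf D' x \<le> 2 / real (card X')"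
proof -
  have le: "\<And>x. pmf D' x \<le> 2 * (indicator X' x / real (card X'))"
    using assms by (simp add: sub_dist_def)
  show "set_pmf D' \<subseteq> X'"
  proof
    fix x assume "x \<in> set_pmf D'"
    hence "pmf D' x > 0" by (simp add: pmf_positive)
    thus "x \<in> X'" using le[of x] by (cases "x \<in> X'") auto
  qed
  fix x show "pmf D' x \<le> 2 / real (card X')"
    using le[of x] by (cases "x \<in> X'") (auto simp: indicator_def)
qed

lemma prob_take: "L \<le> n \<Longrightarrow> measure_pmf.prob (iid_pmf n D) {S. distinct (take L S)} =
   measure_pmf.prob (iid_pmf L D) {xs. distinct xs \<and> set xs \<inter> {} = {}}"
proof -
  assume "L \<le> n"
  have "measure_pmf.prob (iid_pmf L D) {xs. distinct xs \<and> set xs \<inter> {} = {}}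
      = measure_pmf.prob (map_pmf (take L) (iid_pmf n D)) {xs. distinct xs \<and> set xs \<inter> {} = {}}"
    by (simp add: iid_take[OF \<open>L \<le> n\<close>])
  also have "\<dots> = measure_pmf.prob (iid_pmf n D) {S. distinct (take L S)}"
    by (simp add: vimage_def)
  finally show ?thesis by simp
qed

lemma part1:
  fixes m k :: nat and X' :: "nat set" and D' :: "nat pmf"
  assumes k: "1 \<le> k" "k \<le> m" and X: "X' \<subseteq> {1..m}" "X' \<noteq> {}" and D: "D' \<in> sub_dist (pmf_of_set X')"
  defines "a \<equiv> nat \<lfloor>sqrt (real k) / 50\<rfloor>"
  shows "real (card X') \<ge> real k \<Longrightarrow> measure_pmf.prob (iid_pmf (nat \<lceil>sqrt (real m)\<rceil>) D') {S. distinct (take (3*a) S)} \<ge> 0.99"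
    and "real (card X') \<le> 1/100000000 * real k \<Longrightarrow> measure_pmf.prob (iid_pmf (nat \<lceil>sqrt (real m)\<rceil>) D') {S. distinct (take (3*a) S)} \<le> 0.01"
proof -
  have finX: "finite X'" using X finite_subset by blast
  have sX: "card X' \<ge> 1" using finX X(2) by (simp add: Suc_le_eq card_gt_0_iff)
  note sp = sub_props[OF finX X(2) D]
  have pnn: "\<And>y. 0 \<le> pmf D' y" by simp
  have psum: "sum (pmf D') X' = 1" by (rule sum_pmf_eq_1[OF finX sp(1)])
  define r where "r = sqrt (real k)"
  have r0: "r \<ge> 0" and r2: "r^2 = real k" unfolding r_def by auto
  have fl0: "\<lfloor>r / 50\<rfloor> \<ge> 0" using r0 by simp
  have aeq: "real a = real_of_int \<lfloor>r / 50\<rfloor>" unfolding a_def r_def using fl0 r_def by (simp add: of_nat_nat)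
  have a_le: "real a \<le> r / 50" using aeq floor_correct[of "r/50"] by linarith
  have a_ge: "real a \<ge> r / 50 - 1" using aeq floor_correct[of "r/50"] by simp
  have rm: "r \<le> sqrt (real m)" unfolding r_def using k by simp
  have L: "3 * a \<le> nat \<lceil>sqrt (real m)\<rceil>"
  proof -
    have "real (3 * a) \<le> sqrt (real m)" using a_le rm r0 by simp
    also have "\<dots> \<le> real (nat \<lceil>sqrt (real m)\<rceil>)" by linarith
    finally show ?thesis by linarith
  qed
  have prob: "measure_pmf.prob (iid_pmf (nat \<lceil>sqrt (real m)\<rceil>) D') {S. distinct (take (3*a) S)} = Rd X' (pmf D') {} (3*a)"
    by (simp only: prob_take[OF L] Rd_conn[OF finX sp(1)])
  show "real (card X') \<ge> real k \<Longrightarrow> measure_pmf.prob (iid_pmf (nat \<lceil>sqrt (real m)\<rceil>) D') {S. distinct (take (3*a) S)} \<ge> 0.99"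
  proof -
    assume big: "real (card X') \<ge> real k"
    define M where "M = 2 / real (card X')"
    have M0: "M \<ge> 0" unfolding M_def by simp
    have Mk: "M \<le> 2 / real k" unfolding M_def using big k by (intro divide_left_mono) auto
    have low: "Rd X' (pmf D') {} (3*a) \<ge> 1 - M * real (3*a) ^ 2"
    proof -
      have h: "\<And>n. 1 - M * real n ^ 2 \<le> Rd X' (pmf D') {} n"
        using P_lower[OF finX pnn psum, of M] sp(2) M0 unfolding M_def by blast
      show ?thesis by (rule h)
    qed
    have "real (3*a) ^ 2 \<le> 9 * (r/50)^2" using a_le by (simp add: power_mult_distrib)
    also have "\<dots> = 9 * real k / 2500" using r2 by (simp add: power_divide)
    finally have sq: "real (3*a) ^ 2 \<le> 9 * real k / 2500" .
    have "M * real (3*a) ^ 2 \<le> (2 / real k) * (9 * real k / 2500)"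
      using Mk sq M0 by (intro mult_mono) auto
    also have "\<dots> = 18 / 2500" using k by simp
    finally show ?thesis using low prob by simp
  qed
  show "real (card X') \<le> 1/100000000 * real k \<Longrightarrow> measure_pmf.prob (iid_pmf (nat \<lceil>sqrt (real m)\<rceil>) D') {S. distinct (take (3*a) S)} \<le> 0.01"
  proof -
    assume small: "real (card X') \<le> 1/100000000 * real k"
    define s where "s = real (card X')"
    have s1: "s \<ge> 1" using sX unfolding s_def by simp
    have kb: "real k \<ge> 100000000" using small s1 unfolding s_def by simp
    have rb: "r \<ge> 10000"
    proof (rule ccontr)
      assume "\<not> r \<ge> 10000"
      hence "r^2 < 10000^2" using r0 by (intro power_strict_mono) auto
      thus False using r2 kb by simp
    qed
    have a199: "real a \<ge> 199" using a_ge rb by simp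
    have ar: "real a \<ge> r / 100" using a_ge rb by simp
    have a2: "real a ^ 2 \<ge> real k / 10000"
    proof -
      have "(r/100)^2 \<le> real a ^ 2" using ar r0 by (intro power_mono) auto
      thus ?thesis using r2 by (simp add: power_divide)
    qed
    define d where "d = min (1/2) ((real a + 1) / s)"
    have d0: "0 \<le> d" unfolding d_def using s1 by auto
    have d1: "d \<le> 1/2" unfolding d_def by (rule min.cobounded1)
    have ds: "d * real (card X') \<le> real (Suc a)"
    proof -
      have "d * s \<le> (real a + 1) / s * s" unfolding d_def using s1 by (intro mult_right_mono) auto
      thus ?thesis using s1 unfolding s_def by simp
    qed
    have iter: "Rd X' (pmf D') {} (a + 2 * a) \<le> (1 - d) ^ a"
      by (rule P_iter[OF finX pnn psum d0 d1 ds])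
    have ad: "real a * d \<ge> 99"
    proof (cases "1/2 \<le> (real a + 1) / s")
      case True
      hence "d = 1/2" unfolding d_def by simp
      hence "real a * d = real a / 2" by simp
      thus ?thesis using a199 by linarith
    next
      case False
      hence dd: "d = (real a + 1) / s" unfolding d_def by simp
      have "real a * d \<ge> real a ^ 2 / s" unfolding dd using s1
        by (simp add: power2_eq_square divide_right_mono field_simps)
      moreover have "real a ^ 2 / s \<ge> (real k / 10000) / (real k / 100000000)"
        using a2 small s1 kb unfolding s_def by (intro frac_le) auto
      moreover have "(real k / 10000) / (real k / 100000000) = 10000" using kb by simp
      ultimately show ?thesis by linarith
    qed
    have bern: "1 + real a * d \<le> (1 + d) ^ a" using Bernoulli_inequality[of d a] d0 by simp
    have prod1: "(1 - d) ^ a * (1 + d) ^ a \<le> 1"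
    proof -
      have "(1 - d) ^ a * (1 + d) ^ a = (1 - d^2) ^ a" by (simp add: power_mult_distrib[symmetric] power2_eq_square algebra_simps)
      also have "\<dots> \<le> 1" using d0 d1 power_le_one[of d 2] by (intro power_le_one) auto
      finally show ?thesis .
    qed
    have nn: "(1 - d) ^ a \<ge> 0" using d1 by simp
    have "(1 - d) ^ a * (1 + real a * d) \<le> (1 - d) ^ a * (1 + d) ^ a" by (rule mult_left_mono[OF bern nn])
    hence h1: "(1 - d) ^ a * (1 + real a * d) \<le> 1" using prod1 by linarith
    have "(1 - d) ^ a * 100 \<le> (1 - d) ^ a * (1 + real a * d)" using ad by (intro mult_left_mono[OF _ nn]) linarith
    hence "(1 - d) ^ a * 100 \<le> 1" using h1 by linarith
    hence "(1 - d) ^ a \<le> 0.01" by simp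
    moreover have "3 * a = a + 2 * a" by simp
    ultimately show ?thesis using prob iter by simp
  qed
qed




lemma remdups_map_inj: "inj f \<Longrightarrow> remdups (map f xs) = map f (remdups xs)"
  by (induction xs) (auto simp: inj_image_mem_iff)

lemma perm_exists:
  "distinct t \<Longrightarrow> distinct t' \<Longrightarrow> length t = length t' \<Longrightarrow> set t \<subseteq> A \<Longrightarrow> set t' \<subseteq> A
   \<Longrightarrow> \<exists>\<pi>. \<pi> permutes A \<and> map \<pi> t = t'"
proof (induction t arbitrary: t')
  case Nil thus ?case using permutes_id[of A] by (intro exI[of _ id]) (simp add: id_def)
next
  case (Cons x xs)
  then obtain y ys where t': "t' = y # ys" by (cases t') auto
  from Cons.IH[of ys] Cons.prems t' obtain \<sigma> where \<sigma>: "\<sigma> permutes A" "map \<sigma> xs = ys" by auto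
  have xA: "x \<in> A" and yA: "y \<in> A" using Cons.prems t' by auto
  have sxA: "\<sigma> x \<in> A" using permutes_in_image[OF \<sigma>(1)] xA by simp
  have "\<sigma> x \<notin> set ys"
  proof
    assume "\<sigma> x \<in> set ys"
    then obtain z where "z \<in> set xs" "\<sigma> z = \<sigma> x" using \<sigma>(2) by auto
    hence "z = x" using permutes_inj[OF \<sigma>(1)] by (auto dest: injD)
    thus False using \<open>z \<in> set xs\<close> Cons.prems by auto
  qed
  moreover have "y \<notin> set ys" using Cons.prems t' by auto
  ultimately have fix_ys: "map (Transposition.transpose (\<sigma> x) y) ys = ys"
    by (intro map_idI) (auto intro: transpose_apply_other)
  define \<pi> where "\<pi> = Transposition.transpose (\<sigma> x) y \<circ> \<sigma>"
  have "\<pi> permutes A" unfolding \<pi>_def by (intro permutes_compose \<sigma>(1) permutes_swap_id sxA yA)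
  moreover have "map \<pi> (x # xs) = t'"
    unfolding \<pi>_def t' using fix_ys \<sigma>(2) by (simp add: map_map[symmetric])
  ultimately show ?case by blast
qed

definition hh :: "nat \<Rightarrow> nat list \<Rightarrow> nat list option" where
  "hh N S = (if N \<le> card (set S) then Some (take N (remdups S)) else None)"

definition Inj :: "nat \<Rightarrow> nat \<Rightarrow> nat list set" where
  "Inj N m = {t. length t = N \<and> distinct t \<and> set t \<subseteq> {1..m}}"

lemma finite_Inj: "finite (Inj N m)"
  unfolding Inj_def by (rule finite_subset[OF _ finite_lists_length_eq[of "{1..m}" N]]) auto

lemma hh_map: "inj \<pi> \<Longrightarrow> hh N (map \<pi> S) = map_option (map \<pi>) (hh N S)"
  unfolding hh_def by (simp add: remdups_map_inj take_map card_image inj_on_subset[of \<pi> UNIV])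

lemma hh_range: "set S \<subseteq> {1..m} \<Longrightarrow> hh N S \<in> insert None (Some ` Inj N m)"
  unfolding hh_def Inj_def using set_take_subset[of N "remdups S"]
  by (auto simp: length_remdups_card_conv)

lemma equal_probs:
  assumes inv: "\<And>\<pi>. \<pi> permutes {1..m} \<Longrightarrow> map_pmf (map \<pi>) \<mu> = \<mu>"
  shows "\<exists>q. \<forall>t \<in> Inj N m. pmf (map_pmf (hh N) \<mu>) (Some t) = q"
proof (cases "Inj N m = {}")
  case True thus ?thesis by auto
next
  case False
  then obtain t0 where t0: "t0 \<in> Inj N m" by auto
  have "pmf (map_pmf (hh N) \<mu>) (Some t) = pmf (map_pmf (hh N) \<mu>) (Some t0)" if t: "t \<in> Inj N m" for t
  proof -
    obtain \<pi> where \<pi>: "\<pi> permutes {1..m}" "map \<pi> t0 = t"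
      using perm_exists[of t0 t "{1..m}"] t t0 unfolding Inj_def by auto
    have inj: "inj \<pi>" using permutes_inj[OF \<pi>(1)] .
    have injo: "inj (map_option (map \<pi>))"
      using inj by (intro option.inj_map inj_mapI) auto
    have "map_pmf (hh N) \<mu> = map_pmf (hh N) (map_pmf (map \<pi>) \<mu>)" by (simp add: inv[OF \<pi>(1)])
    also have "\<dots> = map_pmf (map_option (map \<pi>)) (map_pmf (hh N) \<mu>)"
      by (simp add: map_pmf_comp hh_map[OF inj])
    finally have "pmf (map_pmf (hh N) \<mu>) (Some t) = pmf (map_pmf (map_option (map \<pi>)) (map_pmf (hh N) \<mu>)) (map_option (map \<pi>) (Some t0))"
      using \<pi>(2) by simp
    also have "\<dots> = pmf (map_pmf (hh N) \<mu>) (Some t0)" by (rule pmf_map_inj'[OF injo])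
    finally show ?thesis .
  qed
  thus ?thesis by blast
qed

lemma hh_sub: assumes "length S = 2 * N" "N \<le> card (set S)"
  shows "take N (remdups S) \<in> sub_sample N S"
proof -
  define t where "t = take N (remdups S)"
  define ix where "ix y = (SOME i. i < length S \<and> S ! i = y)" for y
  have tS: "set t \<subseteq> set S" unfolding t_def using set_take_subset[of N "remdups S"] by auto
  have ix: "ix y < length S \<and> S ! ix y = y" if "y \<in> set S" for y
    unfolding ix_def by (rule someI_ex) (use that in \<open>auto simp: in_set_conv_nth\<close>)
  have lt: "length t = N" unfolding t_def using assms(2) by (simp add: length_remdups_card_conv)
  have dt: "distinct t" unfolding t_def by simp
  have inj: "inj_on ix (set t)"
  proof (rule inj_onI)
    fix y z assume "y \<in> set t" "z \<in> set t" "ix y = ix z"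
    thus "y = z" using ix[of y] ix[of z] tS by auto
  qed
  have e1: "map (\<lambda>i. S ! i) (map ix t) = t" unfolding map_map by (rule map_idI) (use ix tS in auto)
  have e2: "length (map ix t) = N" using lt by simp
  have e3: "distinct (map ix t)" using dt inj by (simp add: distinct_map)
  have e4: "set (map ix t) \<subseteq> {..<2*N}" using ix tS assms(1) by auto
  show ?thesis unfolding sub_sample_def t_def[symmetric]
    by (rule CollectI, rule exI[of _ "map ix t"]) (use e1 e2 e3 e4 in auto)
qed

definition ind :: "bool \<Rightarrow> real" where "ind b = (if b then 1 else 0)"

lemma Min_bound:
  assumes "length S = 2 * N"
  shows "Min ((\<lambda>S'. if f S' then 1 else 0 :: real) ` sub_sample N S)
         \<le> (case hh N S of None \<Rightarrow> 1 | Some t \<Rightarrow> ind (f t))"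
proof -
  let ?V = "(\<lambda>S'. if f S' then 1 else 0 :: real) ` sub_sample N S"
  have fin: "finite ?V" by (rule finite_subset[of _ "{0,1}"]) auto
  have "map (\<lambda>i. S ! i) [0..<N] \<in> sub_sample N S" unfolding sub_sample_def by force
  hence ne: "?V \<noteq> {}" by auto
  show ?thesis
  proof (cases "N \<le> card (set S)")
    case True
    hence "take N (remdups S) \<in> sub_sample N S" by (rule hh_sub[OF assms])
    hence "Min ?V \<le> (if f (take N (remdups S)) then 1 else 0)" using fin by (intro Min_le) auto
    thus ?thesis using True by (simp add: hh_def ind_def)
  next
    case False
    have "Min ?V \<le> 1" using Min_in[OF fin ne] by auto
    thus ?thesis using False by (simp add: hh_def)
  qed
qed

lemma Max_bound:
  assumes "length S = 2 * N"
  shows "Max ((\<lambda>S'. if f S' then 1 else 0 :: real) ` sub_sample N S)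
         \<ge> (case hh N S of None \<Rightarrow> 0 | Some t \<Rightarrow> ind (f t))"
proof -
  let ?V = "(\<lambda>S'. if f S' then 1 else 0 :: real) ` sub_sample N S"
  have fin: "finite ?V" by (rule finite_subset[of _ "{0,1}"]) auto
  have "map (\<lambda>i. S ! i) [0..<N] \<in> sub_sample N S" unfolding sub_sample_def by force
  hence ne: "?V \<noteq> {}" by auto
  show ?thesis
  proof (cases "N \<le> card (set S)")
    case True
    hence "take N (remdups S) \<in> sub_sample N S" by (rule hh_sub[OF assms])
    hence "Max ?V \<ge> (if f (take N (remdups S)) then 1 else 0)" using fin by (intro Max_ge) auto
    thus ?thesis using True by (simp add: hh_def ind_def)
  next
    case False
    have "Max ?V \<ge> 0" using Max_in[OF fin ne] by auto
    thus ?thesis using False by (simp add: hh_def)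
  qed
qed




lemma exp_formula:
  fixes \<mu> :: "nat list pmf"
  assumes supp: "\<And>S. S \<in> set_pmf \<mu> \<Longrightarrow> set S \<subseteq> {1..m}"
    and q: "\<forall>t\<in>Inj N m. pmf (map_pmf (hh N) \<mu>) (Some t) = q"
  shows "measure_pmf.expectation \<mu> (\<lambda>S. case hh N S of None \<Rightarrow> v | Some t \<Rightarrow> ind (f t))
           = q * (\<Sum>t\<in>Inj N m. ind (f t)) + v * pmf (map_pmf (hh N) \<mu>) None"
    and "pmf (map_pmf (hh N) \<mu>) None = 1 - real (card (Inj N m)) * q"
proof -
  define \<nu> where "\<nu> = map_pmf (hh N) \<mu>"
  define A where "A = insert None (Some ` Inj N m)"
  have finA: "finite A" unfolding A_def using finite_Inj by simp
  have sub: "set_pmf \<nu> \<subseteq> A"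
  proof
    fix a assume "a \<in> set_pmf \<nu>"
    then obtain S where "S \<in> set_pmf \<mu>" "a = hh N S" unfolding \<nu>_def by auto
    thus "a \<in> A" unfolding A_def using hh_range[OF supp, of S N] by simp
  qed
  have nA: "None \<notin> Some ` Inj N m" by auto
  have sumS: "(\<Sum>a\<in>Some ` Inj N m. g a) = (\<Sum>t\<in>Inj N m. g (Some t))" for g :: "nat list option \<Rightarrow> real"
    by (subst sum.reindex) (auto simp: inj_on_def)
  let ?\<phi> = "\<lambda>a. case a of None \<Rightarrow> v | Some t \<Rightarrow> ind (f t)"
  have "measure_pmf.expectation \<mu> (\<lambda>S. ?\<phi> (hh N S)) = measure_pmf.expectation \<nu> ?\<phi>"
    unfolding \<nu>_def by simp
  also have "\<dots> = (\<Sum>a\<in>A. ?\<phi> a * pmf \<nu> a)"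
    by (rule integral_measure_pmf_real[OF finA]) (use sub in auto)
  also have "\<dots> = v * pmf \<nu> None + (\<Sum>t\<in>Inj N m. ind (f t) * pmf \<nu> (Some t))"
    unfolding A_def using finite_Inj nA by (simp add: sumS)
  also have "\<dots> = q * (\<Sum>t\<in>Inj N m. ind (f t)) + v * pmf \<nu> None"
    using q unfolding \<nu>_def by (simp add: sum_distrib_left mult.commute)
  finally show "measure_pmf.expectation \<mu> (\<lambda>S. case hh N S of None \<Rightarrow> v | Some t \<Rightarrow> ind (f t))
           = q * (\<Sum>t\<in>Inj N m. ind (f t)) + v * pmf (map_pmf (hh N) \<mu>) None" unfolding \<nu>_def .
  have "1 = (\<Sum>a\<in>A. pmf \<nu> a)" by (rule sum_pmf_eq_1[OF finA sub, symmetric])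
  also have "\<dots> = pmf \<nu> None + (\<Sum>t\<in>Inj N m. pmf \<nu> (Some t))"
    unfolding A_def using finite_Inj nA by (simp add: sumS)
  also have "\<dots> = pmf \<nu> None + real (card (Inj N m)) * q"
    using q unfolding \<nu>_def by simp
  finally show "pmf (map_pmf (hh N) \<mu>) None = 1 - real (card (Inj N m)) * q" unfolding \<nu>_def by simp
qed

lemma fin_iid_of_set: "finite A \<Longrightarrow> A \<noteq> {} \<Longrightarrow> finite (set_pmf (iid_pmf n (pmf_of_set A)))"
  by (rule finite_set_iid) simp

lemma prob_in_set:
  assumes A: "finite A" "A \<noteq> {}"
  shows "measure_pmf.prob (iid_pmf n (pmf_of_set A)) {xs. x \<in> set xs} \<le> real n / real (card A)"
proof (induction n)
  case 0 thus ?case by simp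
next
  case (Suc n)
  let ?a = "real (card A)"
  have a0: "?a > 0" using A by (simp add: card_gt_0_iff)
  have fin: "\<And>y. finite (set_pmf (map_pmf ((#) y) (iid_pmf n (pmf_of_set A))))"
    using fin_iid_of_set[OF A] by simp
  have "measure_pmf.prob (iid_pmf (Suc n) (pmf_of_set A)) {xs. x \<in> set xs}
     = (\<Sum>y\<in>A. pmf (pmf_of_set A) y * measure_pmf.prob (map_pmf ((#) y) (iid_pmf n (pmf_of_set A))) {xs. x \<in> set xs})"
    by (simp only: iid_pmf.simps) (rule measure_bind_fin[OF A(1) _ fin], use A in simp)
  also have "\<dots> \<le> (\<Sum>y\<in>A. (1 / ?a) * ((if y = x then 1 else 0) + real n / ?a))"
  proof (rule sum_mono)
    fix y assume y: "y \<in> A"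
    have "measure_pmf.prob (map_pmf ((#) y) (iid_pmf n (pmf_of_set A))) {xs. x \<in> set xs} \<le> (if y = x then 1 else 0) + real n / ?a"
    proof (cases "y = x")
      case True thus ?thesis by (simp add: measure_pmf.prob_le_1)
    next
      case False
      hence "((#) y -` {xs. x \<in> set xs}) = {xs. x \<in> set xs}" by auto
      thus ?thesis using Suc False by simp
    qed
    thus "pmf (pmf_of_set A) y * measure_pmf.prob (map_pmf ((#) y) (iid_pmf n (pmf_of_set A))) {xs. x \<in> set xs}
        \<le> (1 / ?a) * ((if y = x then 1 else 0) + real n / ?a)"
      using y A by (simp add: divide_right_mono)
  qed
  also have "\<dots> = (1 / ?a) * (\<Sum>y\<in>A. (if y = x then 1 else 0)) + (1 / ?a) * (?a * (real n / ?a))"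
    by (simp only: sum_distrib_left[symmetric] sum.distrib distrib_left sum_constant)
  also have "\<dots> = (1 / ?a) * (\<Sum>y\<in>A. (if y = x then 1 else 0)) + real n / ?a"
    using a0 by simp
  also have "\<dots> \<le> (1 / ?a) * 1 + real n / ?a"
    using A a0 by (intro add_right_mono mult_left_mono) (auto simp: sum.delta)
  also have "\<dots> = real (Suc n) / ?a" by (simp add: add_divide_distrib)
  finally show ?case .
qed

definition Zf :: "nat list \<Rightarrow> real" where "Zf S = real (length S) - real (card (set S))"

lemma Zf_nn: "Zf S \<ge> 0" unfolding Zf_def using card_length[of S] by simp

lemma EZ:
  fixes A :: "nat set"
  assumes A: "finite A" "A \<noteq> {}"
  shows "measure_pmf.expectation (iid_pmf n (pmf_of_set A)) Zf \<le> real n ^ 2 / real (card A)"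
proof (induction n)
  case 0 thus ?case by (simp add: Zf_def)
next
  case (Suc n)
  let ?a = "real (card A)"
  let ?M = "iid_pmf n (pmf_of_set A)"
  have a0: "?a > 0" using A by (simp add: card_gt_0_iff)
  have fin: "\<And>y. finite (set_pmf (map_pmf ((#) y) ?M))"
    using fin_iid_of_set[OF A] by simp
  have step: "measure_pmf.expectation (map_pmf ((#) y) ?M) Zf
      = measure_pmf.expectation ?M Zf + measure_pmf.prob ?M {xs. y \<in> set xs}" for y
  proof -
    have Zc: "Zf (y # xs) = Zf xs + indicator {xs. y \<in> set xs} xs" for xs
      unfolding Zf_def by (cases "y \<in> set xs") (auto simp: card_insert_if)
    have int: "integrable (measure_pmf ?M) g" for g :: "nat list \<Rightarrow> real"
      by (rule integrable_measure_pmf_finite[OF fin_iid_of_set[OF A]])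
    have "measure_pmf.expectation (map_pmf ((#) y) ?M) Zf = measure_pmf.expectation ?M (\<lambda>xs. Zf xs + indicator {xs. y \<in> set xs} xs)"
      by (simp add: Zc)
    also have "\<dots> = measure_pmf.expectation ?M Zf + measure_pmf.expectation ?M (indicator {xs. y \<in> set xs})"
      by (rule Bochner_Integration.integral_add[OF int int])
    finally show ?thesis by simp
  qed
  have "measure_pmf.expectation (iid_pmf (Suc n) (pmf_of_set A)) Zf
     = (\<Sum>y\<in>A. pmf (pmf_of_set A) y *\<^sub>R measure_pmf.expectation (map_pmf ((#) y) ?M) Zf)"
    by (simp only: iid_pmf.simps) (rule pmf_expectation_bind[OF A(1) fin], use A in simp)
  also have "\<dots> \<le> (\<Sum>y\<in>A. (1 / ?a) * (real n ^ 2 / ?a + real n / ?a))"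
  proof (rule sum_mono)
    fix y assume y: "y \<in> A"
    have "measure_pmf.expectation (map_pmf ((#) y) ?M) Zf \<le> real n ^ 2 / ?a + real n / ?a"
      using step[of y] Suc prob_in_set[OF A, of n y] by linarith
    thus "pmf (pmf_of_set A) y *\<^sub>R measure_pmf.expectation (map_pmf ((#) y) ?M) Zf \<le> (1 / ?a) * (real n ^ 2 / ?a + real n / ?a)"
      using y A by (simp add: divide_right_mono)
  qed
  also have "\<dots> = real n ^ 2 / ?a + real n / ?a" using a0 by simp
  also have "\<dots> \<le> real (Suc n) ^ 2 / ?a" using a0
    by (simp add: add_divide_distrib[symmetric] divide_right_mono power2_eq_square algebra_simps)
  finally show ?case .
qed

lemma bad_bound:
  fixes A :: "nat set"
  assumes A: "finite A" "A \<noteq> {}"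
  shows "measure_pmf.prob (iid_pmf (2*N) (pmf_of_set A)) {S. card (set S) < N} \<le> 4 * real N / real (card A)"
proof -
  let ?M = "iid_pmf (2*N) (pmf_of_set A)"
  let ?a = "real (card A)"
  have a0: "?a > 0" using A by (simp add: card_gt_0_iff)
  have int: "integrable (measure_pmf ?M) g" for g :: "nat list \<Rightarrow> real"
    by (rule integrable_measure_pmf_finite[OF fin_iid_of_set[OF A]])
  have "(real N + 1) * measure_pmf.prob ?M {S. card (set S) < N}
      = measure_pmf.expectation ?M (\<lambda>S. (real N + 1) * indicator {S. card (set S) < N} S)"
    by simp
  also have "\<dots> \<le> measure_pmf.expectation ?M Zf"
  proof (rule integral_mono_AE[OF int int])
    show "AE S in measure_pmf ?M. (real N + 1) * indicator {S. card (set S) < N} S \<le> Zf S"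
    proof (rule AE_pmfI)
      fix S assume "S \<in> set_pmf ?M"
      hence len: "length S = 2 * N" using set_pmf_iid by blast
      show "(real N + 1) * indicator {S. card (set S) < N} S \<le> Zf S"
        using len Zf_nn[of S] by (auto simp: indicator_def Zf_def)
    qed
  qed
  also have "\<dots> \<le> real (2*N) ^ 2 / ?a" by (rule EZ[OF A])
  also have "\<dots> = (real N + 1) * (4 * real N * (real N / (real N + 1)) / ?a)"
  proof -
    have n1: "real N + 1 \<noteq> 0" by linarith
    have eq: "(real N + 1) * (real N / (real N + 1)) = real N" using n1 by simp
    have "real (2*N) ^ 2 / ?a = 4 * real N * real N / ?a" by (simp add: power2_eq_square)
    also have "\<dots> = 4 * real N * ((real N + 1) * (real N / (real N + 1))) / ?a" by (simp only: eq)
    also have "\<dots> = (real N + 1) * (4 * real N * (real N / (real N + 1)) / ?a)"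
      by (simp only: times_divide_eq_right mult_ac)
    finally show ?thesis .
  qed
  finally have "measure_pmf.prob ?M {S. card (set S) < N} \<le> 4 * real N * (real N / (real N + 1)) / ?a"
    by (rule mult_left_le_imp_le) simp
  also have "\<dots> \<le> 4 * real N * 1 / ?a"
    using a0 by (intro divide_right_mono mult_left_mono) auto
  finally show ?thesis by simp
qed




lemma iid_inv:
  fixes m :: nat
  assumes "\<pi> permutes {1..m}" "m \<ge> 1"
  shows "map_pmf (map \<pi>) (iid_pmf n (pmf_of_set {1..m})) = iid_pmf n (pmf_of_set {1..m})"
proof -
  have inj: "inj \<pi>" by (rule permutes_inj[OF assms(1)])
  have "map_pmf (map \<pi>) (iid_pmf n (pmf_of_set {1..m})) = iid_pmf n (map_pmf \<pi> (pmf_of_set {1..m}))"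
    by (rule iid_map)
  also have "map_pmf \<pi> (pmf_of_set {1..m}) = pmf_of_set (\<pi> ` {1..m})"
  proof -
    have i1: "inj_on \<pi> {1..m}" by (rule inj_on_subset[OF inj subset_UNIV])
    have ne: "{1..m} \<noteq> {}" using assms(2) by simp
    show ?thesis by (rule map_pmf_of_set_inj[OF i1 ne]) simp
  qed
  also have "\<pi> ` {1..m} = {1..m}" by (rule permutes_image[OF assms(1)])
  finally show ?thesis .
qed

definition FF :: "nat \<Rightarrow> nat \<Rightarrow> nat set set" where
  "FF m s = {X. X \<subseteq> {1..m} \<and> card X = s}"

definition mixT :: "nat \<Rightarrow> nat \<Rightarrow> nat \<Rightarrow> nat list pmf" where
  "mixT m s n = pmf_of_set (FF m s) \<bind> (\<lambda>X. iid_pmf n (pmf_of_set X))"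

lemma FF_props:
  assumes "1 \<le> s" "s \<le> m"
  shows "finite (FF m s)" "FF m s \<noteq> {}" "\<And>X. X \<in> FF m s \<Longrightarrow> finite X \<and> X \<noteq> {} \<and> X \<subseteq> {1..m} \<and> card X = s"
proof -
  show "finite (FF m s)" unfolding FF_def by (rule finite_subset[of _ "Pow {1..m}"]) auto
  obtain T where "T \<subseteq> {1..m}" "card T = s" using obtain_subset_with_card_n[of s "{1..m}"] assms by auto
  thus "FF m s \<noteq> {}" unfolding FF_def by auto
  fix X assume "X \<in> FF m s"
  hence X: "X \<subseteq> {1..m}" "card X = s" unfolding FF_def by auto
  have "finite X" using X(1) finite_subset by blast
  moreover have "X \<noteq> {}" using X assms by auto
  ultimately show "finite X \<and> X \<noteq> {} \<and> X \<subseteq> {1..m} \<and> card X = s" using X by auto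
qed

lemma mix_inv:
  assumes "\<pi> permutes {1..m}" "1 \<le> s" "s \<le> m"
  shows "map_pmf (map \<pi>) (mixT m s n) = mixT m s n"
proof -
  note F = FF_props[OF assms(2,3)]
  have inj: "inj \<pi>" by (rule permutes_inj[OF assms(1)])
  have "map_pmf (map \<pi>) (mixT m s n) = pmf_of_set (FF m s) \<bind> (\<lambda>X. map_pmf (map \<pi>) (iid_pmf n (pmf_of_set X)))"
    unfolding mixT_def by (simp add: map_bind_pmf)
  also have "\<dots> = pmf_of_set (FF m s) \<bind> (\<lambda>X. iid_pmf n (pmf_of_set (\<pi> ` X)))"
  proof (rule bind_pmf_cong[OF refl])
    fix X assume "X \<in> set_pmf (pmf_of_set (FF m s))"
    hence X: "finite X" "X \<noteq> {}" using F by auto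
    have "map_pmf \<pi> (pmf_of_set X) = pmf_of_set (\<pi> ` X)"
      by (rule map_pmf_of_set_inj[OF inj_on_subset[OF inj subset_UNIV] X(2) X(1)])
    thus "map_pmf (map \<pi>) (iid_pmf n (pmf_of_set X)) = iid_pmf n (pmf_of_set (\<pi> ` X))"
      by (simp add: iid_map)
  qed
  also have "\<dots> = map_pmf (image \<pi>) (pmf_of_set (FF m s)) \<bind> (\<lambda>Y. iid_pmf n (pmf_of_set Y))"
    by (simp add: bind_map_pmf)
  also have "map_pmf (image \<pi>) (pmf_of_set (FF m s)) = pmf_of_set (image \<pi> ` FF m s)"
    using F inj by (intro map_pmf_of_set_inj) (auto simp: inj_on_def inj_image_eq_iff)
  also have "image \<pi> ` FF m s = FF m s"
  proof (rule card_subset_eq[OF F(1)])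
    show "image \<pi> ` FF m s \<subseteq> FF m s"
    proof
      fix Y assume "Y \<in> image \<pi> ` FF m s"
      then obtain X where X: "X \<in> FF m s" "Y = \<pi> ` X" by auto
      have "\<pi> ` X \<subseteq> \<pi> ` {1..m}" using X F by auto
      hence "\<pi> ` X \<subseteq> {1..m}" using permutes_image[OF assms(1)] by simp
      moreover have "card (\<pi> ` X) = card X" by (rule card_image[OF inj_on_subset[OF inj subset_UNIV]])
      ultimately show "Y \<in> FF m s" using X unfolding FF_def by auto
    qed
    show "card (image \<pi> ` FF m s) = card (FF m s)"
      using inj by (intro card_image) (auto simp: inj_on_def inj_image_eq_iff)
  qed
  finally show ?thesis unfolding mixT_def .
qed

lemma mix_supp:
  assumes "1 \<le> s" "s \<le> m" "S \<in> set_pmf (mixT m s n)"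
  shows "set S \<subseteq> {1..m} \<and> length S = n"
proof -
  note F = FF_props[OF assms(1,2)]
  from assms(3) obtain X where X: "X \<in> FF m s" "S \<in> set_pmf (iid_pmf n (pmf_of_set X))"
    unfolding mixT_def using F by auto
  have "set S \<subseteq> X \<and> length S = n" using X(2) set_pmf_iid[of n "pmf_of_set X"] F(3)[OF X(1)] by auto
  thus ?thesis using F(3)[OF X(1)] by auto
qed

lemma mix_fin: assumes "1 \<le> s" "s \<le> m" shows "finite (set_pmf (mixT m s n))"
proof -
  have "set_pmf (mixT m s n) \<subseteq> {S. set S \<subseteq> {1..m} \<and> length S = n}" using mix_supp[OF assms] by blast
  thus ?thesis by (rule finite_subset) (simp add: finite_lists_length_eq)
qed

lemma mix_avg:
  fixes g :: "nat list \<Rightarrow> real"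
  assumes "1 \<le> s" "s \<le> m"
  shows "measure_pmf.expectation (mixT m s n) g = (\<Sum>X\<in>FF m s. measure_pmf.expectation (iid_pmf n (pmf_of_set X)) g) / real (card (FF m s))"
proof -
  note F = FF_props[OF assms]
  have "measure_pmf.expectation (mixT m s n) g = (\<Sum>X\<in>FF m s. measure_pmf.expectation (iid_pmf n (pmf_of_set X)) g /\<^sub>R real (card (FF m s)))"
    unfolding mixT_def using F by (intro pmf_expectation_bind_pmf_of_set) (auto intro: fin_iid_of_set)
  thus ?thesis by (simp add: sum_divide_distrib divide_inverse mult.commute sum_distrib_left)
qed

lemma mix_bad:
  assumes "1 \<le> s" "s \<le> m"
  shows "measure_pmf.prob (mixT m s (2*N)) {S. card (set S) < N} \<le> 4 * real N / real s"
proof -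
  note F = FF_props[OF assms]
  have "measure_pmf.prob (mixT m s (2*N)) {S. card (set S) < N}
      = (\<Sum>X\<in>FF m s. pmf (pmf_of_set (FF m s)) X * measure_pmf.prob (iid_pmf (2*N) (pmf_of_set X)) {S. card (set S) < N})"
    unfolding mixT_def using F by (intro measure_bind_fin) (auto intro: fin_iid_of_set)
  also have "\<dots> \<le> (\<Sum>X\<in>FF m s. pmf (pmf_of_set (FF m s)) X * (4 * real N / real s))"
  proof (rule sum_mono)
    fix X assume "X \<in> FF m s"
    hence "measure_pmf.prob (iid_pmf (2*N) (pmf_of_set X)) {S. card (set S) < N} \<le> 4 * real N / real s"
      using bad_bound[of X N] F(3) by auto
    thus "pmf (pmf_of_set (FF m s)) X * measure_pmf.prob (iid_pmf (2*N) (pmf_of_set X)) {S. card (set S) < N}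
        \<le> pmf (pmf_of_set (FF m s)) X * (4 * real N / real s)" by (intro mult_left_mono) auto
  qed
  also have "\<dots> = 4 * real N / real s"
    using sum_pmf_eq_1[OF F(1), of "pmf_of_set (FF m s)"] F by (simp add: sum_distrib_right[symmetric])
  finally show ?thesis .
qed




lemma part2:
  fixes m :: nat and f :: "nat list \<Rightarrow> bool"
  assumes m: "m \<ge> 200000000"
  defines "N \<equiv> nat \<lfloor>1/100000000000 * real m\<rfloor>"
  shows "(\<exists>X'. X' \<subseteq> {1..m} \<and> card X' = m \<and>
             measure_pmf.expectation (iid_pmf (2*N) (pmf_of_set X'))
               (\<lambda>S. Min ((\<lambda>S'. if f S' then 1 else 0 :: real) ` sub_sample N S)) \<le> 0.51)
          \<or>
          (\<exists>X'. X' \<subseteq> {1..m} \<and> X' \<noteq> {} \<and> real (card X') \<le> 1/100000000 * real m \<and>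
             measure_pmf.expectation (iid_pmf (2*N) (pmf_of_set X'))
               (\<lambda>S. Max ((\<lambda>S'. if f S' then 1 else 0 :: real) ` sub_sample N S)) \<ge> 0.49)"
proof -
  define cm where "cm = 1/100000000 * real m"
  define s where "s = nat \<lfloor>cm\<rfloor>"
  have cm2: "cm \<ge> 2" unfolding cm_def using m by simp
  have cmm: "cm \<le> real m" unfolding cm_def by simp
  have fl: "real s = real_of_int \<lfloor>cm\<rfloor>" unfolding s_def using cm2 by simp
  have s_le: "real s \<le> cm" using fl floor_correct[of cm] by linarith
  have s_ge: "real s \<ge> cm - 1" using fl floor_correct[of cm] by linarith
  have s1: "1 \<le> s" using s_ge cm2 by linarith
  have sm: "s \<le> m" using s_le cmm by linarith
  have m1: "1 \<le> m" using m by simp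
  have N_le: "real N \<le> cm / 1000"
  proof -
    have "real N = real_of_int \<lfloor>1/100000000000 * real m\<rfloor>" unfolding N_def by simp
    also have "\<dots> \<le> 1/100000000000 * real m" by (rule of_int_floor_le)
    finally show ?thesis unfolding cm_def by simp
  qed
  have N0: "real N \<ge> 0" by simp
  have badT_bd: "4 * real N / real s \<le> 0.01"
  proof -
    have "4 * real N \<le> 0.01 * (cm / 2)" using N_le by simp
    also have "\<dots> \<le> 0.01 * real s" using s_ge cm2 by simp
    finally show ?thesis using s1 by (simp add: divide_le_eq)
  qed
  have badS_bd: "4 * real N / real m \<le> 0.01"
  proof -
    have "4 * real N \<le> 0.01 * real m" using N_le cmm cm2 by simp
    thus ?thesis using m1 by (simp add: divide_le_eq)
  qed
  define \<mu>S where "\<mu>S = iid_pmf (2*N) (pmf_of_set {1..m})"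
  define \<mu>T where "\<mu>T = mixT m s (2*N)"
  define \<psi>min where "\<psi>min S = Min ((\<lambda>S'. if f S' then 1 else 0 :: real) ` sub_sample N S)" for S
  define \<psi>max where "\<psi>max S = Max ((\<lambda>S'. if f S' then 1 else 0 :: real) ` sub_sample N S)" for S
  define \<phi>1 where "\<phi>1 S = (case hh N S of None \<Rightarrow> 1 | Some t \<Rightarrow> ind (f t))" for S
  define \<phi>0 where "\<phi>0 S = (case hh N S of None \<Rightarrow> 0 | Some t \<Rightarrow> ind (f t))" for S
  define Fs where "Fs = (\<Sum>t\<in>Inj N m. ind (f t))"
  define K where "K = real (card (Inj N m))"
  have Fs0: "Fs \<ge> 0" unfolding Fs_def by (intro sum_nonneg) (simp add: ind_def)
  have finS: "finite (set_pmf \<mu>S)" unfolding \<mu>S_def by (rule fin_iid_of_set) (use m1 in auto)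
  have finT: "finite (set_pmf \<mu>T)" unfolding \<mu>T_def by (rule mix_fin[OF s1 sm])
  have suppS: "set S \<subseteq> {1..m} \<and> length S = 2*N" if "S \<in> set_pmf \<mu>S" for S
    using that set_pmf_iid[of "2*N" "pmf_of_set {1..m}"] m1 unfolding \<mu>S_def by auto
  have suppT: "set S \<subseteq> {1..m} \<and> length S = 2*N" if "S \<in> set_pmf \<mu>T" for S
    using mix_supp[OF s1 sm] that unfolding \<mu>T_def by blast
  obtain qS where qS: "\<forall>t\<in>Inj N m. pmf (map_pmf (hh N) \<mu>S) (Some t) = qS"
    using equal_probs[of m \<mu>S N] iid_inv[OF _ m1] unfolding \<mu>S_def by blast
  obtain qT where qT: "\<forall>t\<in>Inj N m. pmf (map_pmf (hh N) \<mu>T) (Some t) = qT"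
    using equal_probs[of m \<mu>T N] mix_inv[OF _ s1 sm] unfolding \<mu>T_def by blast
  have ES: "measure_pmf.expectation \<mu>S \<phi>1 = qS * Fs + 1 * pmf (map_pmf (hh N) \<mu>S) None"
    unfolding \<phi>1_def Fs_def by (rule exp_formula(1)[OF _ qS]) (use suppS in blast)
  have pNS: "pmf (map_pmf (hh N) \<mu>S) None = 1 - K * qS"
    unfolding K_def by (rule exp_formula(2)[OF _ qS]) (use suppS in blast)
  have ET: "measure_pmf.expectation \<mu>T \<phi>0 = qT * Fs + 0 * pmf (map_pmf (hh N) \<mu>T) None"
    unfolding \<phi>0_def Fs_def by (rule exp_formula(1)[OF _ qT]) (use suppT in blast)
  have pNT: "pmf (map_pmf (hh N) \<mu>T) None = 1 - K * qT"
    unfolding K_def by (rule exp_formula(2)[OF _ qT]) (use suppT in blast)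
  have vim: "hh N -` {None} = {S. card (set S) < N}" by (auto simp: hh_def split: if_splits)
  have bS: "pmf (map_pmf (hh N) \<mu>S) None \<le> 0.01"
  proof -
    have "pmf (map_pmf (hh N) \<mu>S) None = measure_pmf.prob \<mu>S {S. card (set S) < N}" by (simp add: pmf_map vim)
    also have "\<dots> \<le> 4 * real N / real (card {1..m})" unfolding \<mu>S_def by (rule bad_bound) (use m1 in auto)
    finally show ?thesis using badS_bd by simp
  qed
  have bT: "pmf (map_pmf (hh N) \<mu>T) None \<le> 0.01"
  proof -
    have "pmf (map_pmf (hh N) \<mu>T) None = measure_pmf.prob \<mu>T {S. card (set S) < N}" by (simp add: pmf_map vim)
    also have "\<dots> \<le> 4 * real N / real s" unfolding \<mu>T_def by (rule mix_bad[OF s1 sm])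
    finally show ?thesis using badT_bd by simp
  qed
  have minb: "measure_pmf.expectation \<mu>S \<psi>min \<le> measure_pmf.expectation \<mu>S \<phi>1"
    by (rule integral_mono_AE[OF integrable_measure_pmf_finite[OF finS] integrable_measure_pmf_finite[OF finS]])
       (rule AE_pmfI, unfold \<psi>min_def \<phi>1_def, rule Min_bound, use suppS in blast)
  have maxb: "measure_pmf.expectation \<mu>T \<phi>0 \<le> measure_pmf.expectation \<mu>T \<psi>max"
    by (rule integral_mono_AE[OF integrable_measure_pmf_finite[OF finT] integrable_measure_pmf_finite[OF finT]])
       (rule AE_pmfI, unfold \<psi>max_def \<phi>0_def, rule Max_bound, use suppT in blast)
  show ?thesis
  proof (cases "measure_pmf.expectation \<mu>S \<psi>min \<le> 0.51")
    case True
    have "card {1..m} = m" by simp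
    thus ?thesis using True unfolding \<mu>S_def \<psi>min_def by blast
  next
    case False
    have qS0: "qS \<ge> 0" using qS pmf_nonneg
    proof (cases "Inj N m = {}")
      case True
      hence "K = 0" unfolding K_def by simp
      hence "pmf (map_pmf (hh N) \<mu>S) None = 1" using pNS by simp
      thus ?thesis using bS by simp
    next
      case False
      then obtain t where "t \<in> Inj N m" by auto
      thus ?thesis using qS pmf_nonneg by metis
    qed
    have Kpos: "K > 0"
    proof (rule ccontr)
      assume "\<not> K > 0"
      hence "K = 0" unfolding K_def by simp
      thus False using pNS bS by simp
    qed
    have big: "qS * Fs > 0.5" using False minb ES bS by simp
    have "K * qT \<ge> 0.99" using pNT bT by simp
    moreover have "K * qS \<le> 1" using pNS pmf_nonneg[of "map_pmf (hh N) \<mu>S" None] by simp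
    ultimately have "K * qT \<ge> K * (0.99 * qS)" by simp
    hence qTS: "qT \<ge> 0.99 * qS" using Kpos by (simp add: mult_le_cancel_left_pos)
    have "qT * Fs \<ge> 0.99 * qS * Fs" using qTS Fs0 by (intro mult_right_mono) auto
    hence ET49: "measure_pmf.expectation \<mu>T \<psi>max \<ge> 0.49" using big maxb ET by simp
    have avg: "measure_pmf.expectation \<mu>T \<psi>max = (\<Sum>X\<in>FF m s. measure_pmf.expectation (iid_pmf (2*N) (pmf_of_set X)) \<psi>max) / real (card (FF m s))"
      unfolding \<mu>T_def by (rule mix_avg[OF s1 sm])
    note F = FF_props[OF s1 sm]
    have "\<exists>X\<in>FF m s. measure_pmf.expectation (iid_pmf (2*N) (pmf_of_set X)) \<psi>max \<ge> 0.49"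
    proof (rule ccontr)
      assume "\<not> ?thesis"
      hence lt: "\<And>X. X \<in> FF m s \<Longrightarrow> measure_pmf.expectation (iid_pmf (2*N) (pmf_of_set X)) \<psi>max < 0.49" by auto
      have "(\<Sum>X\<in>FF m s. measure_pmf.expectation (iid_pmf (2*N) (pmf_of_set X)) \<psi>max) < (\<Sum>X\<in>FF m s. 0.49)"
        using F(1,2) lt by (intro sum_strict_mono) auto
      hence "measure_pmf.expectation \<mu>T \<psi>max < 0.49"
        using avg F(1,2) by (simp add: divide_less_eq card_gt_0_iff)
      thus False using ET49 by simp
    qed
    then obtain X where X: "X \<in> FF m s" "measure_pmf.expectation (iid_pmf (2*N) (pmf_of_set X)) \<psi>max \<ge> 0.49" by blast
    have "X \<subseteq> {1..m}" "X \<noteq> {}" "real (card X) \<le> 1/100000000 * real m"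
      using F(3)[OF X(1)] s_le unfolding cm_def by auto
    thus ?thesis using X(2) unfolding \<psi>max_def by blast
  qed
qed




theorem mainTheorem15:
  shows "\<exists>(c::real) (C::real) (c'::real) (m0::nat).
    0 < c \<and> c < 1 \<and> 0 < C \<and> 0 < c' \<and>
    (\<forall>m::nat. m \<ge> m0 \<longrightarrow>
      (let n_small = nat \<lceil>C * sqrt (real m)\<rceil> in
        \<forall>k::nat. 1 \<le> k \<and> k \<le> m \<longrightarrow>
          (\<exists>f :: nat list \<Rightarrow> bool.
             \<forall>X'. X' \<subseteq> {1..m} \<and> X' \<noteq> {} \<longrightarrow>
               (real (card X') \<ge> real k \<longrightarrow>
                  (\<forall>D' \<in> sub_dist (pmf_of_set X').
                     measure_pmf.prob (iid_pmf n_small D') {S. f S} \<ge> 0.99)) \<and>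
               (real (card X') \<le> c * real k \<longrightarrow>
                  (\<forall>D' \<in> sub_dist (pmf_of_set X').
                     measure_pmf.prob (iid_pmf n_small D') {S. f S} \<le> 0.01))))
      \<and>
      (let N = nat \<lfloor>c' * real m\<rfloor> in
        \<forall>f :: nat list \<Rightarrow> bool.
          (\<exists>X'. X' \<subseteq> {1..m} \<and> card X' = m \<and>
             measure_pmf.expectation (iid_pmf (2*N) (pmf_of_set X'))
               (\<lambda>S. Min ((\<lambda>S'. if f S' then 1 else 0 :: real) ` sub_sample N S)) \<le> 0.51)
          \<or>
          (\<exists>X'. X' \<subseteq> {1..m} \<and> X' \<noteq> {} \<and> real (card X') \<le> c * real m \<and>
             measure_pmf.expectation (iid_pmf (2*N) (pmf_of_set X'))
               (\<lambda>S. Max ((\<lambda>S'. if f S' then 1 else 0 :: real) ` sub_sample N S)) \<ge> 0.49)))"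
proof (rule exI[of _ "1/100000000"], rule exI[of _ "1::real"], rule exI[of _ "1/100000000000"], rule exI[of _ "200000000::nat"], intro conjI allI impI)
  fix m :: nat assume m: "200000000 \<le> m"
  show "let n_small = nat \<lceil>1 * sqrt (real m)\<rceil> in
        \<forall>k::nat. 1 \<le> k \<and> k \<le> m \<longrightarrow>
          (\<exists>f :: nat list \<Rightarrow> bool.
             \<forall>X'. X' \<subseteq> {1..m} \<and> X' \<noteq> {} \<longrightarrow>
               (real (card X') \<ge> real k \<longrightarrow>
                  (\<forall>D' \<in> sub_dist (pmf_of_set X').
                     measure_pmf.prob (iid_pmf n_small D') {S. f S} \<ge> 0.99)) \<and>
               (real (card X') \<le> 1/100000000 * real k \<longrightarrow>
                  (\<forall>D' \<in> sub_dist (pmf_of_set X').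
                     measure_pmf.prob (iid_pmf n_small D') {S. f S} \<le> 0.01)))"
    unfolding Let_def
  proof (intro allI impI)
    fix k :: nat assume k: "1 \<le> k \<and> k \<le> m"
    define a where "a = nat \<lfloor>sqrt (real k) / 50\<rfloor>"
    show "\<exists>f :: nat list \<Rightarrow> bool.
             \<forall>X'. X' \<subseteq> {1..m} \<and> X' \<noteq> {} \<longrightarrow>
               (real (card X') \<ge> real k \<longrightarrow>
                  (\<forall>D' \<in> sub_dist (pmf_of_set X').
                     measure_pmf.prob (iid_pmf (nat \<lceil>1 * sqrt (real m)\<rceil>) D') {S. f S} \<ge> 0.99)) \<and>
               (real (card X') \<le> 1/100000000 * real k \<longrightarrow>
                  (\<forall>D' \<in> sub_dist (pmf_of_set X').
                     measure_pmf.prob (iid_pmf (nat \<lceil>1 * sqrt (real m)\<rceil>) D') {S. f S} \<le> 0.01))"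
      using part1[of k m, folded a_def] k by (intro exI[of _ "\<lambda>S. distinct (take (3*a) S)"]) auto
  qed
  show "let N = nat \<lfloor>1/100000000000 * real m\<rfloor> in
        \<forall>f :: nat list \<Rightarrow> bool.
          (\<exists>X'. X' \<subseteq> {1..m} \<and> card X' = m \<and>
             measure_pmf.expectation (iid_pmf (2*N) (pmf_of_set X'))
               (\<lambda>S. Min ((\<lambda>S'. if f S' then 1 else 0 :: real) ` sub_sample N S)) \<le> 0.51)
          \<or>
          (\<exists>X'. X' \<subseteq> {1..m} \<and> X' \<noteq> {} \<and> real (card X') \<le> 1/100000000 * real m \<and>
             measure_pmf.expectation (iid_pmf (2*N) (pmf_of_set X'))
               (\<lambda>S. Max ((\<lambda>S'. if f S' then 1 else 0 :: real) ` sub_sample N S)) \<ge> 0.49)"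
    unfolding Let_def using part2[OF m] by blast
qed simp_all


end
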